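(* Let $f_1,\dots,f_n$ satisfy Assumptions A1 and A2. Then for all $\beta,\beta'\in\Delta^{n-1}$, \[\|\nabla x^*(\beta)-\nabla x^*(\beta')\|_{1,2}\le\frac{2L^2R}{\mu^2}\left(1+\frac{L_HR}{\mu}\right)\|\beta-\beta'\|_1.\]
   Context: Assumption A1: each $f_i:\mathbb{R}^d\to\mathbb{R}$ is twice differentiable with $\mu\mathbf{I}\preceq\nabla^2 f_i\preceq L\mathbf{I}$, $0<\mu\le L$. Assumption A2: $\|\nabla^2 f_i(x)-\nabla^2 f_i(y)\|_2\le L_H\|x-y\|_2$ for all $x,y,i$. $F=(f_1,\dots,f_n)$, $\nabla F(x)\in\mathbb{R}^{n\times d}$ its Jacobian, $\Delta^{n-1}$ the simplex, $f_\beta=\sum_i\beta_if_i$, $x^*(\beta)=x_\beta=\operatorname{argmin}_xf_\beta(x)$, with $\nabla x^*(\beta)=-\nabla^2f_\beta(x_\beta)^{-1}\nabla F(x_\beta)^\top$. $R$ is the $\ell_2$-diameter of the Pareto set of $F$ (points $x$ with $\nabla f_\beta(x)=0$ for some $\beta$). $\|A\|_{1,2}:=\sup_{\|z\|_1=1}\|Az\|_2$. *)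

theory Defs
  imports "HOL-Analysis.Analysis"
begin

text \<open>Vectors x in R^d are \<open>real^'d\<close>; the n objectives are indexed by a finite type \<open>'n\<close>.
  \<open>g i x\<close> is the gradient and \<open>H i x\<close> the Hessian of \<open>f i\<close> at \<open>x\<close>.\<close>

definition std_simplex :: "(real^'n::finite) set" where
  "std_simplex = {b. (\<forall>i. 0 \<le> b $ i) \<and> (\<Sum>i\<in>UNIV. b $ i) = 1}"

definition norm1 :: "real^'n::finite \<Rightarrow> real" where
  "norm1 z = (\<Sum>i\<in>UNIV. \<bar>z $ i\<bar>)"

text \<open>Loewner order on (square) matrices: A \<preceq> B iff v^T A v \<le> v^T B v for all v.\<close>
definition loewner_le :: "real^'d^'d \<Rightarrow> real^'d^'d \<Rightarrow> bool" where
  "loewner_le A B \<longleftrightarrow> (\<forall>v. v \<bullet> (A *v v) \<le> v \<bullet> (B *v v))"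

text \<open>Induced l2 operator norm of a matrix.\<close>
definition op_norm2 :: "real^'m^'k \<Rightarrow> real" where
  "op_norm2 A = onorm (\<lambda>v. A *v v)"

text \<open>The (1,2)-norm: sup over ||z||_1 = 1 of ||A z||_2.\<close>
definition norm12 :: "real^'n^'d \<Rightarrow> real" where
  "norm12 A = (SUP z\<in>{z. norm1 z = 1}. norm (A *v z))"

text \<open>Weighted objective f_beta, its Hessian, and the minimizer x*(beta).\<close>
definition fbeta :: "('n::finite \<Rightarrow> real^'d \<Rightarrow> real) \<Rightarrow> real^'n \<Rightarrow> real^'d \<Rightarrow> real" where
  "fbeta f b x = (\<Sum>i\<in>UNIV. b $ i * f i x)"

definition Hbeta :: "('n::finite \<Rightarrow> real^'d \<Rightarrow> real^'d^'d) \<Rightarrow> real^'n \<Rightarrow> real^'d \<Rightarrow> real^'d^'d" where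
  "Hbeta H b x = (\<Sum>i\<in>UNIV. b $ i *\<^sub>R H i x)"

definition xstar :: "('n::finite \<Rightarrow> real^'d \<Rightarrow> real) \<Rightarrow> real^'n \<Rightarrow> real^'d" where
  "xstar f b = (THE x. \<forall>y. fbeta f b x \<le> fbeta f b y)"

text \<open>Jacobian of F = (f_1,...,f_n): the n x d matrix whose i-th row is grad f_i.\<close>
definition JacF :: "('n::finite \<Rightarrow> real^'d \<Rightarrow> real^'d) \<Rightarrow> real^'d \<Rightarrow> real^'d^'n" where
  "JacF g x = (\<chi> i. g i x)"

text \<open>grad x*(beta) = - (Hess f_beta(x_beta))^{-1} (grad F(x_beta))^T, a d x n matrix.\<close>
definition Dxstar :: "('n::finite \<Rightarrow> real^'d \<Rightarrow> real) \<Rightarrow> ('n \<Rightarrow> real^'d \<Rightarrow> real^'d)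
    \<Rightarrow> ('n::finite \<Rightarrow> real^'d \<Rightarrow> real^'d^'d) \<Rightarrow> real^'n \<Rightarrow> real^'n^'d" where
  "Dxstar f g H b = - (matrix_inv (Hbeta H b (xstar f b)) ** transpose (JacF g (xstar f b)))"

text \<open>Pareto set: points that are stationary for some f_beta, beta in the std_simplex.\<close>
definition pareto_set :: "('n::finite \<Rightarrow> real^'d \<Rightarrow> real^'d) \<Rightarrow> (real^'d) set" where
  "pareto_set g = {x. \<exists>b\<in>std_simplex. (\<Sum>i\<in>UNIV. b $ i *\<^sub>R g i x) = 0}"

end

theory Submission
  imports Defs
begin

locale setting =
  fixes f :: "'n::finite \<Rightarrow> real^'d::finite \<Rightarrow> real"
    and g :: "'n \<Rightarrow> real^'d \<Rightarrow> real^'d"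
    and H :: "'n \<Rightarrow> real^'d \<Rightarrow> real^'d^'d"
    and \<mu> L :: real
  assumes grad: "\<And>i x. (f i has_derivative (\<lambda>h. g i x \<bullet> h)) (at x)"
    and hess: "\<And>i x. (g i has_derivative (\<lambda>h. H i x *v h)) (at x)"
    and mu_pos: "0 < \<mu>" and mu_le_L: "\<mu> \<le> L"
    and lower: "\<And>i x. loewner_le (\<mu> *\<^sub>R mat 1) (H i x)"
    and upper: "\<And>i x. loewner_le (H i x) (L *\<^sub>R mat 1)"
begin

lemma quad: "\<mu> * (h \<bullet> h) \<le> h \<bullet> (H i x *v h)" "h \<bullet> (H i x *v h) \<le> L * (h \<bullet> h)"
  using lower[of i x] upper[of i x] unfolding loewner_le_def
  by (auto simp: scaleR_matrix_vector_assoc[symmetric])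

lemma taylor:
  "\<exists>\<xi>. f i y = f i x + g i x \<bullet> (y - x) + (H i \<xi> *v (y - x)) \<bullet> (y - x) / 2"
proof (cases "y = x")
  case True then show ?thesis by auto
next
  case False
  define h where "h = y - x"
  define p where "p = (\<lambda>t::real. x + t *\<^sub>R h)"
  define diff where "diff = (\<lambda>m::nat. if m = 0 then (\<lambda>t. f i (p t))
      else if m = 1 then (\<lambda>t. g i (p t) \<bullet> h) else (\<lambda>t. (H i (p t) *v h) \<bullet> h))"
  have dp: "(p has_derivative (\<lambda>s. s *\<^sub>R h)) (at t)" for t
    unfolding p_def by (auto intro!: derivative_eq_intros)
  have d0: "DERIV (diff 0) t :> diff 1 t" for t
  proof -
    have "((\<lambda>t. f i (p t)) has_derivative (\<lambda>s. g i (p t) \<bullet> (s *\<^sub>R h))) (at t)"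
      by (rule has_derivative_compose[OF dp grad])
    then show ?thesis unfolding diff_def has_field_derivative_def
      by (simp add: mult_commute_abs)
  qed
  have d1: "DERIV (diff 1) t :> diff 2 t" for t
  proof -
    have "((\<lambda>t. g i (p t)) has_derivative (\<lambda>s. H i (p t) *v (s *\<^sub>R h))) (at t)"
      by (rule has_derivative_compose[OF dp hess])
    then have "((\<lambda>t. g i (p t) \<bullet> h) has_derivative (\<lambda>s. (H i (p t) *v (s *\<^sub>R h)) \<bullet> h)) (at t)"
      by (auto intro!: derivative_eq_intros)
    then show ?thesis unfolding diff_def has_field_derivative_def
      by (simp add: mult_commute_abs matrix_vector_mult_scaleR)
  qed
  have "\<exists>t. (if 1 < (0::real) then 1 < t \<and> t < 0 else 0 < t \<and> t < 1) \<and>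
    diff 0 1 = (\<Sum>m<2. (diff m 0 / fact m) * (1 - 0)^m) + (diff 2 t / fact 2) * (1 - 0)^2"
    apply (rule Taylor[of 2 diff "diff 0" 0 1])
    using d0 d1 by (auto simp: numeral_2_eq_2 less_Suc_eq)
  then obtain t where "diff 0 1 = (\<Sum>m<2. (diff m 0 / fact m)) + diff 2 t / 2" by auto
  then have "f i y = f i x + g i x \<bullet> h + (H i (p t) *v h) \<bullet> h / 2"
    by (simp add: diff_def p_def h_def eval_nat_numeral)
  then show ?thesis unfolding h_def by blast
qed

lemma lo: "f i y \<ge> f i x + g i x \<bullet> (y - x) + \<mu> / 2 * ((y - x) \<bullet> (y - x))"
proof -
  obtain \<xi> where "f i y = f i x + g i x \<bullet> (y - x) + (H i \<xi> *v (y - x)) \<bullet> (y - x) / 2"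
    using taylor by blast
  moreover have "\<mu> * ((y - x) \<bullet> (y - x)) \<le> (H i \<xi> *v (y - x)) \<bullet> (y - x)"
    using quad(1)[of "y - x" i \<xi>] by (simp add: inner_commute)
  ultimately show ?thesis by linarith
qed

lemma up: "f i y \<le> f i x + g i x \<bullet> (y - x) + L / 2 * ((y - x) \<bullet> (y - x))"
proof -
  obtain \<xi> where "f i y = f i x + g i x \<bullet> (y - x) + (H i \<xi> *v (y - x)) \<bullet> (y - x) / 2"
    using taylor by blast
  moreover have "(H i \<xi> *v (y - x)) \<bullet> (y - x) \<le> L * ((y - x) \<bullet> (y - x))"
    using quad(2)[of "y - x" i \<xi>] by (simp add: inner_commute)
  ultimately show ?thesis by linarith
qed

lemma L_pos: "0 < L" using mu_pos mu_le_L by linarith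

lemma smono: "\<mu> * ((y - x) \<bullet> (y - x)) \<le> (g i y - g i x) \<bullet> (y - x)"
proof -
  have "(x - y) \<bullet> (x - y) = (y - x) \<bullet> (y - x)" by (simp add: inner_diff_left inner_diff_right inner_commute)
  moreover have "g i y \<bullet> (x - y) = - (g i y \<bullet> (y - x))" by (simp add: inner_diff_right)
  ultimately show ?thesis using lo[of i x y] lo[of i y x] by (simp add: inner_diff_left) 
qed

lemma half_coco: "f i y - f i x - g i x \<bullet> (y - x) \<ge> ((g i y - g i x) \<bullet> (g i y - g i x)) / (2 * L)"
proof -
  define h where "h = g i y - g i x"
  define z where "z = y - (1 / L) *\<^sub>R h"
  have 1: "f i z \<ge> f i x + g i x \<bullet> (z - x)"
  proof -
    have "0 \<le> \<mu> / 2 * ((z - x) \<bullet> (z - x))" using mu_pos by simp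
    then show ?thesis using lo[of i x z] by linarith
  qed
  have 2: "f i z \<le> f i y + g i y \<bullet> (z - y) + L / 2 * ((z - y) \<bullet> (z - y))"
    by (rule up)
  have "z - y = - ((1/L) *\<^sub>R h)" unfolding z_def by simp
  then have zy: "g i y \<bullet> (z - y) = - (g i y \<bullet> h) / L" "L / 2 * ((z - y) \<bullet> (z - y)) = (h \<bullet> h) / (2 * L)"
    using L_pos by (auto simp: power2_eq_square field_simps)
  have "g i x \<bullet> (z - x) = g i x \<bullet> (y - x) - (g i x \<bullet> h) / L"
    unfolding z_def by (simp add: inner_diff_right algebra_simps)
  moreover have "(g i y \<bullet> h) / L - (g i x \<bullet> h) / L = (h \<bullet> h) / L"
    unfolding h_def by (simp add: diff_divide_distrib[symmetric] inner_diff_left)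
  moreover have "(h \<bullet> h) / L - (h \<bullet> h) / (2 * L) = (h \<bullet> h) / (2 * L)"
    using L_pos by (simp add: field_simps)
  ultimately show ?thesis using 1 2 zy unfolding h_def[symmetric] by linarith
qed

lemma glip: "norm (g i y - g i x) \<le> L * norm (y - x)"
proof -
  define h where "h = g i y - g i x"
  have a: "(h \<bullet> h) / L \<le> h \<bullet> (y - x)"
  proof -
    have "(h \<bullet> h) / (2 * L) \<le> f i y - f i x - g i x \<bullet> (y - x)" using half_coco[of i y x] h_def by simp
    moreover have "(h \<bullet> h) / (2 * L) \<le> f i x - f i y - g i y \<bullet> (x - y)"
      proof -
      have "g i x - g i y = - h" unfolding h_def by simp
      then have "(g i x - g i y) \<bullet> (g i x - g i y) = h \<bullet> h" by simp
      then show ?thesis using half_coco[of i x y] by simp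
    qed
    moreover have "g i y \<bullet> (x - y) = - (g i y \<bullet> (y - x))" by (simp add: inner_diff_right)
    moreover have "h \<bullet> (y - x) = g i y \<bullet> (y - x) - g i x \<bullet> (y - x)" unfolding h_def by (simp add: inner_diff_left)
    moreover have "(h \<bullet> h) / (2 * L) + (h \<bullet> h) / (2 * L) = (h \<bullet> h) / L" using L_pos by (simp add: field_simps)
    ultimately show ?thesis by linarith
  qed
  have "norm h ^ 2 \<le> L * (norm h * norm (y - x))"
  proof -
    have "h \<bullet> h \<le> L * (h \<bullet> (y - x))" using a L_pos by (simp add: field_simps)
    also have "\<dots> \<le> L * (norm h * norm (y - x))"
      using L_pos Cauchy_Schwarz_ineq2[of h "y - x"] by (simp add: mult_left_mono)
    finally show ?thesis by (simp add: power2_norm_eq_inner)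
  qed
  then have "norm h * norm h \<le> norm h * (L * norm (y - x))" by (simp add: power2_eq_square algebra_simps)
  then show ?thesis unfolding h_def[symmetric]
    by (cases "norm h = 0") (use L_pos in \<open>auto simp: mult_le_cancel_left\<close>)
qed

lemma Hbound: "norm (H i x *v w) \<le> L * norm w"
proof (cases "w = 0")
  case True then show ?thesis by simp
next
  case False
  then have nw: "norm w > 0" by simp
  show ?thesis
  proof (rule field_le_epsilon)
    fix e :: real assume e: "0 < e"
    define e' where "e' = e / norm w"
    have e': "e' > 0" using e nw unfolding e'_def by simp
    obtain d where d: "d > 0" and dd: "\<And>y. norm (y - x) < d \<Longrightarrow>
        norm (g i y - g i x - H i x *v (y - x)) \<le> e' * norm (y - x)"
      using hess[of i x] e' unfolding has_derivative_at_alt by blast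
    define t where "t = d / (2 * norm w)"
    have t: "t > 0" using d nw unfolding t_def by simp
    have "norm (t *\<^sub>R w) = d / 2" using nw t d unfolding t_def by simp
    then have "norm ((x + t *\<^sub>R w) - x) < d" using d by simp
    from dd[OF this] have 1: "norm (g i (x + t *\<^sub>R w) - g i x - t *\<^sub>R (H i x *v w)) \<le> e' * (t * norm w)"
      using t by (simp add: matrix_vector_mult_scaleR)
    have 2: "norm (g i (x + t *\<^sub>R w) - g i x) \<le> L * (t * norm w)"
      using glip[of i "x + t *\<^sub>R w" x] t by simp
    have "t * norm (H i x *v w) = norm (t *\<^sub>R (H i x *v w))" using t by simp
    also have "\<dots> \<le> norm (g i (x + t *\<^sub>R w) - g i x) + norm (g i (x + t *\<^sub>R w) - g i x - t *\<^sub>R (H i x *v w))"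
      by (metis norm_minus_commute norm_triangle_sub diff_diff_eq2 diff_self diff_zero)
    also have "\<dots> \<le> t * (L * norm w + e' * norm w)" using 1 2 by (simp add: algebra_simps)
    finally have "norm (H i x *v w) \<le> L * norm w + e' * norm w" using t by (simp add: mult_le_cancel_left_pos)
    then show "norm (H i x *v w) \<le> L * norm w + e" using nw unfolding e'_def by simp
  qed
qed

definition G :: "real^'n \<Rightarrow> real^'d \<Rightarrow> real^'d" where
  "G b x = (\<Sum>i\<in>UNIV. b $ i *\<^sub>R g i x)"

lemma G_inner: "G b x \<bullet> v = (\<Sum>i\<in>UNIV. b $ i * (g i x \<bullet> v))"
  unfolding G_def by (simp add: inner_sum_left)

lemma fbeta_deriv: "(fbeta f b has_derivative (\<lambda>h. G b x \<bullet> h)) (at x)"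
proof -
  have "((\<lambda>x. \<Sum>i\<in>UNIV. b $ i * f i x) has_derivative (\<lambda>h. \<Sum>i\<in>UNIV. b $ i * (g i x \<bullet> h))) (at x)"
    by (intro has_derivative_sum has_derivative_mult_right grad)
  then show ?thesis unfolding fbeta_def[abs_def] G_inner by simp
qed

lemma simplex_D: assumes "b \<in> std_simplex" shows "\<And>i. 0 \<le> b $ i" "(\<Sum>i\<in>UNIV. b $ i) = 1"
  using assms unfolding std_simplex_def by auto

lemma fb_lo: assumes b: "b \<in> std_simplex"
  shows "fbeta f b y \<ge> fbeta f b x + G b x \<bullet> (y - x) + \<mu> / 2 * ((y - x) \<bullet> (y - x))"
proof -
  have "(\<Sum>i\<in>UNIV. b $ i * (f i x + g i x \<bullet> (y - x) + \<mu> / 2 * ((y - x) \<bullet> (y - x))))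
      \<le> (\<Sum>i\<in>UNIV. b $ i * f i y)"
    by (intro sum_mono mult_left_mono lo simplex_D[OF b])
  moreover have "(\<Sum>i\<in>UNIV. b $ i * (f i x + g i x \<bullet> (y - x) + \<mu> / 2 * ((y - x) \<bullet> (y - x))))
     = (\<Sum>i\<in>UNIV. b $ i * f i x) + (\<Sum>i\<in>UNIV. b $ i * (g i x \<bullet> (y - x))) + (\<Sum>i\<in>UNIV. b $ i) * (\<mu> / 2 * ((y - x) \<bullet> (y - x)))"
    by (simp add: distrib_left sum.distrib sum_distrib_right)
  ultimately show ?thesis using simplex_D(2)[OF b] unfolding fbeta_def G_inner by simp
qed

lemma G_mono: assumes b: "b \<in> std_simplex"
  shows "\<mu> * ((y - x) \<bullet> (y - x)) \<le> (G b y - G b x) \<bullet> (y - x)"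
proof -
  have "(\<Sum>i\<in>UNIV. b $ i * (\<mu> * ((y - x) \<bullet> (y - x)))) \<le> (\<Sum>i\<in>UNIV. b $ i * ((g i y - g i x) \<bullet> (y - x)))"
    by (intro sum_mono mult_left_mono smono simplex_D[OF b])
  moreover have "(G b y - G b x) \<bullet> (y - x) = (\<Sum>i\<in>UNIV. b $ i * ((g i y - g i x) \<bullet> (y - x)))"
    by (simp add: inner_diff_left G_inner sum_subtractf[symmetric] right_diff_distrib)
  moreover have "(\<Sum>i\<in>UNIV. b $ i * (\<mu> * ((y - x) \<bullet> (y - x)))) = \<mu> * ((y - x) \<bullet> (y - x))"
    using simplex_D(2)[OF b] by (simp add: sum_distrib_right[symmetric])
  ultimately show ?thesis by simp
qed

lemma ex_min: assumes b: "b \<in> std_simplex" shows "\<exists>x. \<forall>y. fbeta f b x \<le> fbeta f b y"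
proof -
  define F where "F = fbeta f b"
  define c where "c = norm (G b 0)"
  define r where "r = 2 * c / \<mu>"
  have cont: "continuous_on (cball 0 r) F"
    unfolding F_def
    by (intro continuous_at_imp_continuous_on ballI has_derivative_continuous[OF fbeta_deriv])
  have "r \<ge> 0" unfolding r_def c_def using mu_pos by simp
  then obtain x where x: "x \<in> cball 0 r" "\<forall>y\<in>cball 0 r. F x \<le> F y"
    using continuous_attains_inf[OF compact_cball _ cont] by auto
  have "F x \<le> F y" for y
  proof (cases "y \<in> cball 0 r")
    case True then show ?thesis using x by auto
  next
    case False
    then have ny: "norm y > r" by simp
    have "F y \<ge> F 0 + G b 0 \<bullet> y + \<mu> / 2 * (y \<bullet> y)" using fb_lo[OF b, of 0 y] unfolding F_def by simp
    moreover have "G b 0 \<bullet> y \<ge> - (c * norm y)" unfolding c_def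
      using Cauchy_Schwarz_ineq2[of "G b 0" y] by linarith
    moreover have "\<mu> / 2 * (y \<bullet> y) \<ge> c * norm y"
    proof -
      have "\<mu> / 2 * norm y \<ge> c" using ny mu_pos unfolding r_def by (simp add: field_simps)
      then have "\<mu> / 2 * norm y * norm y \<ge> c * norm y" by (intro mult_right_mono) auto
      then show ?thesis by (simp add: power2_eq_square[symmetric] power2_norm_eq_inner[symmetric] algebra_simps)
    qed
    ultimately have "F y \<ge> F 0" by linarith
    moreover have "F x \<le> F 0" using x \<open>r \<ge> 0\<close> by simp
    ultimately show ?thesis by simp
  qed
  then show ?thesis unfolding F_def by blast
qed

lemma ex_zero: assumes b: "b \<in> std_simplex" shows "\<exists>x. G b x = 0"
proof -
  obtain x where x: "\<forall>y. fbeta f b x \<le> fbeta f b y" using ex_min[OF b] by blast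
  have "(\<lambda>h. G b x \<bullet> h) = (\<lambda>v. 0)"
    by (rule differential_zero_maxmin[of x UNIV, OF _ _ fbeta_deriv]) (use x in auto)
  then have "G b x \<bullet> G b x = 0" using fun_cong[of _ _ "G b x"] by fastforce
  then show ?thesis by auto
qed

lemma xstar_eq: assumes b: "b \<in> std_simplex" and z: "G b z = 0" shows "xstar f b = z"
  unfolding xstar_def
proof (rule the_equality)
  show "\<forall>y. fbeta f b z \<le> fbeta f b y"
  proof
    fix y
    have "0 \<le> \<mu> / 2 * ((y - z) \<bullet> (y - z))" using mu_pos by simp
    then show "fbeta f b z \<le> fbeta f b y" using fb_lo[OF b, of z y] z by simp
  qed
  fix x assume x: "\<forall>y. fbeta f b x \<le> fbeta f b y"
  have "fbeta f b x \<ge> fbeta f b z + \<mu> / 2 * ((x - z) \<bullet> (x - z))" using fb_lo[OF b, of z x] z by simp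
  moreover have "fbeta f b x \<le> fbeta f b z" using x by simp
  ultimately have "\<mu> / 2 * ((x - z) \<bullet> (x - z)) \<le> 0" by simp
  then have "(x - z) \<bullet> (x - z) \<le> 0" using mu_pos by (simp add: mult_le_0_iff)
  then show "x = z" by (metis eq_iff_diff_eq_0 inner_gt_zero_iff not_less)
qed

lemma G_xstar: assumes b: "b \<in> std_simplex" shows "G b (xstar f b) = 0"
  using ex_zero[OF b] xstar_eq[OF b] by metis

lemma pareto_eq: "pareto_set g = {x. \<exists>b\<in>std_simplex. G b x = 0}"
  unfolding pareto_set_def G_def by simp

lemma simplex_le1: assumes b: "b \<in> std_simplex" shows "b $ i \<le> 1"
proof -
  have "b $ i \<le> (\<Sum>j\<in>UNIV. b $ j)"
    by (rule member_le_sum) (use simplex_D[OF b] in auto)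
  then show ?thesis using simplex_D(2)[OF b] by simp
qed

lemma pareto_bounded: "bounded (pareto_set g)"
proof -
  define M where "M = (\<Sum>i\<in>UNIV. norm (g i 0))"
  have "norm x \<le> M / \<mu>" if xp: "x \<in> pareto_set g" for x
  proof -
    obtain b where b: "b \<in> std_simplex" and z: "G b x = 0" using xp unfolding pareto_eq by auto
    have nG: "norm (G b 0) \<le> M"
    proof -
      have "norm (G b 0) \<le> (\<Sum>i\<in>UNIV. norm (b $ i *\<^sub>R g i 0))" unfolding G_def by (rule norm_sum)
      also have "\<dots> \<le> M" unfolding M_def
        by (intro sum_mono) (use simplex_D(1)[OF b] simplex_le1[OF b] in \<open>auto intro!: mult_left_le_one_le\<close>)
      finally show ?thesis .
    qed
    have "\<mu> * (x \<bullet> x) \<le> (G b x - G b 0) \<bullet> x" using G_mono[OF b, of 0 x] by (simp add: inner_diff_left)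
    also have "\<dots> = - (G b 0 \<bullet> x)" using z by simp
    also have "\<dots> \<le> norm (G b 0) * norm x" using Cauchy_Schwarz_ineq2[of "G b 0" x] by linarith
    also have "\<dots> \<le> M * norm x" using nG by (simp add: mult_right_mono)
    finally have "\<mu> * norm x * norm x \<le> M * norm x"
      by (simp add: power2_norm_eq_inner[symmetric] power2_eq_square mult.assoc)
    then have "\<mu> * norm x \<le> M"
      by (cases "norm x = 0") (use nG norm_ge_zero[of "G b 0"] in \<open>auto simp: mult_le_cancel_right simp del: norm_ge_zero\<close>)
    then show ?thesis using mu_pos by (simp add: field_simps)
  qed
  then show ?thesis unfolding bounded_iff by blast
qed

lemma axis_simplex: "(axis i 1 :: real^'n) \<in> std_simplex"
  unfolding std_simplex_def by (auto simp: axis_def)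

lemma G_axis: "G (axis i 1) x = g i x"
proof -
  have "\<And>j. (axis i 1 $ j) *\<^sub>R g j x = (if j = i then g i x else 0)" by (simp add: axis_def)
  then show ?thesis unfolding G_def by simp
qed

lemma xstar_pareto: assumes b: "b \<in> std_simplex" shows "xstar f b \<in> pareto_set g"
  using G_xstar[OF b] b pareto_eq by auto

lemma g_bound: assumes b: "b \<in> std_simplex"
  shows "norm (g i (xstar f b)) \<le> L * diameter (pareto_set g)"
proof -
  define z where "z = xstar f (axis i 1)"
  have gz: "g i z = 0" using G_xstar[OF axis_simplex[of i]] unfolding z_def G_axis .
  have zp: "z \<in> pareto_set g" unfolding z_def by (rule xstar_pareto[OF axis_simplex])
  have "norm (g i (xstar f b)) = norm (g i (xstar f b) - g i z)" using gz by simp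
  also have "\<dots> \<le> L * norm (xstar f b - z)" by (rule glip)
  also have "\<dots> \<le> L * diameter (pareto_set g)"
    using diameter_bounded_bound[OF pareto_bounded xstar_pareto[OF b] zp] L_pos
    by (simp add: dist_norm)
  finally show ?thesis .
qed

lemma Hb_mult: "Hbeta H b x *v w = (\<Sum>i\<in>UNIV. b $ i *\<^sub>R (H i x *v w))"
  unfolding Hbeta_def
  by (simp add: vec_eq_iff matrix_vector_mult_def sum_component sum_distrib_left sum_distrib_right mult.assoc)
     (subst sum.swap, simp add: sum_distrib_left)

lemma Hb_coercive: assumes b: "b \<in> std_simplex"
  shows "\<mu> * norm w \<le> norm (Hbeta H b x *v w)"
proof -
  have "(\<Sum>i\<in>UNIV. b $ i * (\<mu> * (w \<bullet> w))) \<le> (\<Sum>i\<in>UNIV. b $ i * (w \<bullet> (H i x *v w)))"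
    by (intro sum_mono mult_left_mono quad simplex_D[OF b])
  moreover have "(\<Sum>i\<in>UNIV. b $ i * (\<mu> * (w \<bullet> w))) = \<mu> * (w \<bullet> w)"
    using simplex_D(2)[OF b] by (simp add: sum_distrib_right[symmetric])
  moreover have "w \<bullet> (Hbeta H b x *v w) = (\<Sum>i\<in>UNIV. b $ i * (w \<bullet> (H i x *v w)))"
    unfolding Hb_mult by (simp add: inner_sum_right)
  ultimately have "\<mu> * (w \<bullet> w) \<le> w \<bullet> (Hbeta H b x *v w)" by simp
  also have "\<dots> \<le> norm w * norm (Hbeta H b x *v w)" using Cauchy_Schwarz_ineq2 by (metis abs_le_D1)
  finally have "\<mu> * norm w * norm w \<le> norm (Hbeta H b x *v w) * norm w"
    by (simp add: power2_norm_eq_inner[symmetric] power2_eq_square mult.commute mult.left_commute)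
  then show ?thesis by (cases "norm w = 0") (auto simp: mult_le_cancel_right)
qed

lemma Hb_inv: assumes b: "b \<in> std_simplex"
  shows "Hbeta H b x *v (matrix_inv (Hbeta H b x) *v u) = u"
proof -
  define A where "A = Hbeta H b x"
  have "inj ((*v) A)"
  proof (rule injI)
    fix v w assume "A *v v = A *v w"
    then have "A *v (v - w) = 0" by (simp add: matrix_vector_mult_diff_distrib)
    then have "\<mu> * norm (v - w) \<le> 0" using Hb_coercive[OF b, of "v - w" x] unfolding A_def by simp
    then show "v = w" using mu_pos by (simp add: mult_le_0_iff)
  qed
  then have "invertible A" using matrix_left_invertible_injective invertible_left_inverse by blast
  then have "A ** matrix_inv A = mat 1 \<and> matrix_inv A ** A = mat 1"
    unfolding invertible_def matrix_inv_def by (rule someI_ex)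
  then show ?thesis unfolding A_def[symmetric] by (simp add: matrix_vector_mul_assoc)
qed

lemma JT: "transpose (JacF g x) *v z = (\<Sum>i\<in>UNIV. z $ i *\<^sub>R g i x)"
  unfolding JacF_def
  by (simp add: vec_eq_iff matrix_vector_mult_def transpose_def sum_component mult.commute)

lemma sum_bound: "norm (\<Sum>i\<in>UNIV. z $ i *\<^sub>R v i) \<le> norm1 z * C" if "\<And>i. norm (v i) \<le> C"
proof -
  have "norm (\<Sum>i\<in>UNIV. z $ i *\<^sub>R v i) \<le> (\<Sum>i\<in>UNIV. norm (z $ i *\<^sub>R v i))" by (rule norm_sum)
  also have "\<dots> \<le> (\<Sum>i\<in>UNIV. \<bar>z $ i\<bar> * C)" by (intro sum_mono) (auto intro: mult_left_mono that)
  finally show ?thesis unfolding norm1_def by (simp add: sum_distrib_right)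
qed

end

lemma ax_abs: "\<bar>axis j (1::real) $ i\<bar> = (if i = j then 1 else 0)" by (simp add: axis_def)

lemma norm1_ne: "{z. norm1 z = (1::real)} \<noteq> ({} :: (real^'n::finite) set)"
proof -
    obtain j :: 'n where True by blast
    have "norm1 (axis j (1::real)) = 1" unfolding norm1_def ax_abs by simp
    then show ?thesis by (metis empty_iff mem_Collect_eq)
qed

theorem lemma9:
  fixes f :: "'n::finite \<Rightarrow> real^'d::finite \<Rightarrow> real"
    and g :: "'n \<Rightarrow> real^'d \<Rightarrow> real^'d"
    and H :: "'n \<Rightarrow> real^'d \<Rightarrow> real^'d^'d"
    and \<mu> L L\<^sub>H R :: real
  assumes grad: "\<And>i x. (f i has_derivative (\<lambda>h. g i x \<bullet> h)) (at x)"
    and hess: "\<And>i x. (g i has_derivative (\<lambda>h. H i x *v h)) (at x)"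
    and mu_pos: "0 < \<mu>" and mu_le_L: "\<mu> \<le> L"
    and lower: "\<And>i x. loewner_le (\<mu> *\<^sub>R mat 1) (H i x)"
    and upper: "\<And>i x. loewner_le (H i x) (L *\<^sub>R mat 1)"
    and lip: "\<And>i x y. op_norm2 (H i x - H i y) \<le> L\<^sub>H * norm (x - y)"
    and R_def: "R = diameter (pareto_set g)"
    and b1: "\<beta> \<in> std_simplex" and b2: "\<beta>' \<in> std_simplex"
  shows "norm12 (Dxstar f g H \<beta> - Dxstar f g H \<beta>')
         \<le> 2 * L^2 * R / \<mu>^2 * (1 + L\<^sub>H * R / \<mu>) * norm1 (\<beta> - \<beta>')"
proof -
  interpret setting f g H \<mu> L using grad hess mu_pos mu_le_L lower upper by unfold_locales
  have opn: "norm ((H i x - H i y) *v w) \<le> L\<^sub>H * norm (x - y) * norm w" for i x y w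
  proof -
    have "norm ((H i x - H i y) *v w) \<le> op_norm2 (H i x - H i y) * norm w"
      unfolding op_norm2_def by (rule onorm) simp
    also have "\<dots> \<le> L\<^sub>H * norm (x - y) * norm w" using lip by (simp add: mult_right_mono)
    finally show ?thesis .
  qed
  obtain k :: 'd where True by blast
  have neg_mv: "(- M) *v v = - (M *v v)" for M :: "real^'n^'d" and v
    by (simp add: vec_eq_iff matrix_vector_mult_def sum_negf)
  have LH: "0 \<le> L\<^sub>H"
  proof -
    have "0 \<le> op_norm2 (H (undefined::'n) 0 - H undefined (axis k 1))" unfolding op_norm2_def by (rule onorm_pos_le) simp
    also have "\<dots> \<le> L\<^sub>H * norm (0 - axis k (1::real))" by (rule lip)
    finally show ?thesis by simp
  qed
  define xb where "xb = xstar f \<beta>"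
  define xb' where "xb' = xstar f \<beta>'"
  define nd where "nd = norm1 (\<beta> - \<beta>')"
  have nd0: "0 \<le> nd" unfolding nd_def norm1_def by (simp add: sum_nonneg)
  have R0: "0 \<le> R" unfolding R_def
    using diameter_bounded_bound[OF pareto_bounded xstar_pareto[OF b1] xstar_pareto[OF b1]] by simp
  have gb: "norm (g i xb) \<le> L * R" "norm (g i xb') \<le> L * R" for i
    using g_bound[OF b1] g_bound[OF b2] unfolding xb_def xb'_def R_def by auto
  have dx: "norm (xb - xb') \<le> L * R / \<mu> * nd"
  proof -
    have "\<mu> * ((xb - xb') \<bullet> (xb - xb')) \<le> (G \<beta> xb - G \<beta> xb') \<bullet> (xb - xb')"
      by (rule G_mono[OF b1])
    also have "\<dots> = - (G \<beta> xb' \<bullet> (xb - xb'))"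
      using G_xstar[OF b1] unfolding xb_def by (simp add: inner_diff_left)
    also have "\<dots> = - ((G \<beta> xb' - G \<beta>' xb') \<bullet> (xb - xb'))"
      using G_xstar[OF b2] unfolding xb'_def by (simp add: inner_diff_left)
    also have "\<dots> \<le> norm (G \<beta> xb' - G \<beta>' xb') * norm (xb - xb')"
      using Cauchy_Schwarz_ineq2[of "G \<beta> xb' - G \<beta>' xb'" "xb - xb'"] by linarith
    also have "\<dots> \<le> (nd * (L * R)) * norm (xb - xb')"
    proof (rule mult_right_mono)
      have "G \<beta> xb' - G \<beta>' xb' = (\<Sum>i\<in>UNIV. (\<beta> - \<beta>') $ i *\<^sub>R g i xb')"
        unfolding G_def by (simp add: sum_subtractf[symmetric] scaleR_diff_left)
      then show "norm (G \<beta> xb' - G \<beta>' xb') \<le> nd * (L * R)"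
        unfolding nd_def using sum_bound[of "\<lambda>i. g i xb'" "L * R" "\<beta> - \<beta>'"] gb by simp
    qed simp
    finally have "\<mu> * norm (xb - xb') * norm (xb - xb') \<le> (nd * (L * R)) * norm (xb - xb')"
      by (simp add: power2_norm_eq_inner[symmetric] power2_eq_square mult.assoc)
    then have "\<mu> * norm (xb - xb') \<le> nd * (L * R)"
      by (cases "norm (xb - xb') = 0") (use nd0 R0 L_pos in \<open>auto simp: mult_le_cancel_right\<close>)
    then show ?thesis using mu_pos by (simp add: field_simps)
  qed
  have key: "norm ((Dxstar f g H \<beta> - Dxstar f g H \<beta>') *v z)
      \<le> 2 * L^2 * R / \<mu>^2 * (1 + L\<^sub>H * R / \<mu>) * nd" if z: "norm1 z = 1" for z
  proof -
    define A where "A = Hbeta H \<beta> xb"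
    define B where "B = Hbeta H \<beta>' xb'"
    define u where "u = (\<Sum>i\<in>UNIV. z $ i *\<^sub>R g i xb)"
    define u' where "u' = (\<Sum>i\<in>UNIV. z $ i *\<^sub>R g i xb')"
    define w where "w = matrix_inv A *v u"
    define w' where "w' = matrix_inv B *v u'"
    have Aw: "A *v w = u" unfolding w_def A_def by (rule Hb_inv[OF b1])
    have Bw: "B *v w' = u'" unfolding w'_def B_def by (rule Hb_inv[OF b2])
    have Dz: "(Dxstar f g H \<beta> - Dxstar f g H \<beta>') *v z = w' - w"
      unfolding Dxstar_def w_def w'_def A_def B_def u_def u'_def xb_def xb'_def
      by (simp add: matrix_vector_mult_diff_rdistrib matrix_vector_mul_assoc[symmetric] JT
          neg_mv del: transpose_matrix_vector)
    have nu: "norm u \<le> L * R" unfolding u_def using sum_bound[of "\<lambda>i. g i xb" "L * R" z] gb z by simp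
    have nw: "norm w \<le> L * R / \<mu>"
    proof -
      have "\<mu> * norm w \<le> L * R" using Hb_coercive[OF b1, of w xb] Aw nu unfolding A_def by simp
      then show ?thesis using mu_pos by (simp add: field_simps)
    qed
    have nuu: "norm (u' - u) \<le> L * norm (xb - xb')"
    proof -
      have "u' - u = (\<Sum>i\<in>UNIV. z $ i *\<^sub>R (g i xb' - g i xb))"
        unfolding u_def u'_def by (simp add: sum_subtractf[symmetric] scaleR_diff_right)
      moreover have "norm (g i xb' - g i xb) \<le> L * norm (xb - xb')" for i
        using glip[of i xb' xb] by (simp add: norm_minus_commute)
      ultimately show ?thesis using sum_bound[of "\<lambda>i. g i xb' - g i xb" "L * norm (xb - xb')" z] z by simp
    qed
    have AB: "A *v w - B *v w = (\<Sum>i\<in>UNIV. (\<beta> - \<beta>') $ i *\<^sub>R (H i xb *v w))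
        + (\<Sum>i\<in>UNIV. \<beta>' $ i *\<^sub>R ((H i xb - H i xb') *v w))"
      unfolding A_def B_def Hb_mult
      by (simp add: sum_subtractf[symmetric] sum.distrib[symmetric] matrix_vector_mult_diff_rdistrib
          scaleR_diff_left scaleR_diff_right)
    have nAB1: "norm (\<Sum>i\<in>UNIV. (\<beta> - \<beta>') $ i *\<^sub>R (H i xb *v w)) \<le> nd * (L * norm w)"
      unfolding nd_def by (rule sum_bound) (rule Hbound)
    have nAB2: "norm (\<Sum>i\<in>UNIV. \<beta>' $ i *\<^sub>R ((H i xb - H i xb') *v w)) \<le> L\<^sub>H * norm (xb - xb') * norm w"
    proof -
      have "norm (\<Sum>i\<in>UNIV. \<beta>' $ i *\<^sub>R ((H i xb - H i xb') *v w))
          \<le> (\<Sum>i\<in>UNIV. norm (\<beta>' $ i *\<^sub>R ((H i xb - H i xb') *v w)))" by (rule norm_sum)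
      also have "\<dots> \<le> (\<Sum>i\<in>UNIV. \<beta>' $ i * (L\<^sub>H * norm (xb - xb') * norm w))"
        by (intro sum_mono) (simp add: simplex_D(1)[OF b2] mult_left_mono[OF opn])
      also have "\<dots> = L\<^sub>H * norm (xb - xb') * norm w"
        using simplex_D(2)[OF b2] by (simp add: sum_distrib_right[symmetric])
      finally show ?thesis .
    qed
    have "B *v (w' - w) = (u' - u) + (A *v w - B *v w)"
      using Aw Bw by (simp add: matrix_vector_mult_diff_distrib)
    then have "\<mu> * norm (w' - w) \<le> norm ((u' - u) + (A *v w - B *v w))"
      using Hb_coercive[OF b2, of "w' - w" xb'] unfolding B_def by simp
    also have "\<dots> \<le> norm (u' - u) + norm (A *v w - B *v w)" by (rule norm_triangle_ineq)
    also have "\<dots> \<le> L * norm (xb - xb') + (nd * (L * norm w) + L\<^sub>H * norm (xb - xb') * norm w)"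
    proof -
      have "norm (A *v w - B *v w) \<le> nd * (L * norm w) + L\<^sub>H * norm (xb - xb') * norm w"
        unfolding AB by (rule order_trans[OF norm_triangle_ineq add_mono[OF nAB1 nAB2]])
      then show ?thesis using nuu by linarith
    qed
    also have "\<dots> \<le> L * (L * R / \<mu> * nd) + (nd * (L * (L * R / \<mu>)) + L\<^sub>H * (L * R / \<mu> * nd) * (L * R / \<mu>))"
    proof -
      have "L * norm (xb - xb') \<le> L * (L * R / \<mu> * nd)" using mult_left_mono[OF dx, of L] L_pos by linarith
      moreover have "nd * (L * norm w) \<le> nd * (L * (L * R / \<mu>))" using mult_left_mono[OF mult_left_mono[OF nw, of L], of nd] L_pos nd0 by linarith
      moreover have "L\<^sub>H * norm (xb - xb') * norm w \<le> L\<^sub>H * (L * R / \<mu> * nd) * (L * R / \<mu>)"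
      proof -
        have "norm (xb - xb') * norm w \<le> (L * R / \<mu> * nd) * (L * R / \<mu>)"
          by (rule mult_mono[OF dx nw]) (use L_pos R0 mu_pos nd0 in auto)
        from mult_left_mono[OF this LH] show ?thesis by (simp only: mult.assoc)
      qed
      ultimately show ?thesis by linarith
    qed
    also have "\<dots> = 2 * (L^2 * R * nd / \<mu>) + L\<^sub>H * L^2 * R^2 * nd / \<mu>^2"
      using mu_pos by (simp add: field_simps power2_eq_square)
    also have "\<dots> \<le> 2 * (L^2 * R * nd / \<mu>) + 2 * (L\<^sub>H * L^2 * R^2 * nd / \<mu>^2)"
    proof -
      have "0 \<le> L\<^sub>H * L^2 * R^2 * nd / \<mu>^2" using LH R0 nd0 mu_pos by simp
      then show ?thesis by linarith
    qed
    also have "\<dots> = \<mu> * (2 * L^2 * R / \<mu>^2 * (1 + L\<^sub>H * R / \<mu>) * nd)"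
      using mu_pos by (simp add: field_simps power2_eq_square)
    finally have F: "\<mu> * norm (w' - w) \<le> \<mu> * (2 * L^2 * R / \<mu>^2 * (1 + L\<^sub>H * R / \<mu>) * nd)" .
    have "norm (w' - w) \<le> 2 * L^2 * R / \<mu>^2 * (1 + L\<^sub>H * R / \<mu>) * nd"
      by (rule mult_left_le_imp_le[OF F mu_pos])
    then show ?thesis using Dz by simp
  qed
  have ne: "{z. norm1 z = 1} \<noteq> ({} :: (real^'n) set)" by (rule norm1_ne)
  show ?thesis unfolding norm12_def nd_def[symmetric]
    by (rule cSUP_least[OF ne]) (rule key, simp)
qed
end
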